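(* Let $(S,\mathcal C)$ be a connectoid and $X\subseteq S$ a countably infinite set. The following are equivalent: (i) there is an end $\omega\in\Omega(S,\mathcal C)$ such that $X$ converges to $\omega$; (ii) for every finite $Y\subseteq S$ there is an element of $\mathcal K(S\setminus Y)$ containing almost all elements of $X$; (iii) there is a necklace containing almost all elements of $X$. Moreover, if $(S,\mathcal C)$ is connected, then (i)–(iii) hold if and only if there is a necklace containing all elements of $X$.
   Context: A connectoid is given by a set $S$ and a set $\mathcal F$ of finite subsets of $S$ such that (i) $F\cup F'\in\mathcal F$ whenever $F,F'\in\mathcal F$ and $F\cap F'\neq\emptyset$, and (ii) $\emptyset\in\mathcal F$ and $\{s\}\in\mathcal F$ for every $s\in S$. A set $C\subseteq S$ is connected if for all $x,y\in C$ there is $F\in\mathcal F$ with $F\subseteq C$ and $x,y\in F$; $\mathcal C$ is the set of connected sets; $(S,\mathcal C)$ is connected if $S\in\mathcal C$. For $S'\subseteq S$, a component of $S'$ is a maximal connected subset of $S'$, and $\mathcal K(S')$ is the set of components of $S'$. "Almost all" means all but finitely many. A necklace is a connected set $N$ for which there is a family $(H_n)_{n\in\mathbb N}$ of finite connected sets with $N=\bigcup_n H_n$ and $H_i\cap H_j\neq\emptyset$ iff $|i-j|\le 1$. For a necklace $N$ and finite $Z\subseteq S$, the $Z$-tail of $N$ is the unique element of $\mathcal K(N\setminus Z)$ containing almost all elements of $N$. Two necklaces are equivalent if for every finite $Z\subseteq S$ their $Z$-tails lie in the same element of $\mathcal K(S\setminus Z)$. An end is an equivalence class of necklaces; $\Omega(S,\mathcal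 C)$ is the set of ends; $K(Z,\omega)$ is the element of $\mathcal K(S\setminus Z)$ containing the $Z$-tails of all necklaces in $\omega$. An infinite set $X\subseteq S$ converges to an end $\omega$ if $K(Y,\omega)$ contains almost all elements of $X$ for every finite $Y\subseteq S$. *)

theory Defs
  imports Main "HOL-Library.Countable_Set"
begin

definition connectoid :: "'a set \<Rightarrow> 'a set set \<Rightarrow> bool" where
  "connectoid S F \<longleftrightarrow>
     (\<forall>A\<in>F. finite A \<and> A \<subseteq> S) \<and>
     (\<forall>A\<in>F. \<forall>B\<in>F. A \<inter> B \<noteq> {} \<longrightarrow> A \<union> B \<in> F) \<and>
     {} \<in> F \<and> (\<forall>s\<in>S. {s} \<in> F)"

definition connected_set :: "'a set set \<Rightarrow> 'a set \<Rightarrow> bool" where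
  "connected_set F C \<longleftrightarrow> (\<forall>x\<in>C. \<forall>y\<in>C. \<exists>A\<in>F. A \<subseteq> C \<and> x \<in> A \<and> y \<in> A)"

definition components :: "'a set set \<Rightarrow> 'a set \<Rightarrow> 'a set set" where
  "components F S' = {C. C \<subseteq> S' \<and> connected_set F C \<and>
      (\<forall>D. C \<subseteq> D \<and> D \<subseteq> S' \<and> connected_set F D \<longrightarrow> D = C)}"

definition necklace :: "'a set set \<Rightarrow> 'a set \<Rightarrow> bool" where
  "necklace F N \<longleftrightarrow> connected_set F N \<and>
     (\<exists>H :: nat \<Rightarrow> 'a set. N = (\<Union>n. H n) \<and>
        (\<forall>n. finite (H n) \<and> connected_set F (H n)) \<and>
        (\<forall>i j. H i \<inter> H j \<noteq> {} \<longleftrightarrow> i \<le> j + 1 \<and> j \<le> i + 1))"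

definition tail :: "'a set set \<Rightarrow> 'a set \<Rightarrow> 'a set \<Rightarrow> 'a set" where
  "tail F N Z = (THE T. T \<in> components F (N - Z) \<and> finite (N - T))"

definition necklace_equiv :: "'a set \<Rightarrow> 'a set set \<Rightarrow> 'a set \<Rightarrow> 'a set \<Rightarrow> bool" where
  "necklace_equiv S F N N' \<longleftrightarrow>
     (\<forall>Z. finite Z \<and> Z \<subseteq> S \<longrightarrow>
        (\<exists>K\<in>components F (S - Z). tail F N Z \<subseteq> K \<and> tail F N' Z \<subseteq> K))"

definition ends :: "'a set \<Rightarrow> 'a set set \<Rightarrow> 'a set set set" where
  "ends S F = {{N'. necklace F N' \<and> N' \<subseteq> S \<and> necklace_equiv S F N N'} | N.
                 necklace F N \<and> N \<subseteq> S}"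

definition end_comp :: "'a set \<Rightarrow> 'a set set \<Rightarrow> 'a set \<Rightarrow> 'a set set \<Rightarrow> 'a set" where
  "end_comp S F Z \<omega> = (THE K. K \<in> components F (S - Z) \<and> (\<forall>N\<in>\<omega>. tail F N Z \<subseteq> K))"

definition converges_to :: "'a set \<Rightarrow> 'a set set \<Rightarrow> 'a set \<Rightarrow> 'a set set \<Rightarrow> bool" where
  "converges_to S F X \<omega> \<longleftrightarrow> infinite X \<and>
     (\<forall>Y. finite Y \<and> Y \<subseteq> S \<longrightarrow> finite (X - end_comp S F Y \<omega>))"

end

theory Submission
  imports Defs
begin

lemma F_props:
  assumes "connectoid S F"
  shows "\<And>A. A \<in> F \<Longrightarrow> finite A \<and> A \<subseteq> S"
    and "\<And>A B. A \<in> F \<Longrightarrow> B \<in> F \<Longrightarrow> A \<inter> B \<noteq> {} \<Longrightarrow> A \<union> B \<in> F"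
    and "{} \<in> F" and "\<And>s. s \<in> S \<Longrightarrow> {s} \<in> F"
  using assms unfolding connectoid_def by blast+

lemma F_connected: "A \<in> F \<Longrightarrow> connected_set F A"
  unfolding connected_set_def by blast

lemma conn_pair: "connected_set F C \<Longrightarrow> x \<in> C \<Longrightarrow> y \<in> C \<Longrightarrow> \<exists>A\<in>F. A \<subseteq> C \<and> x \<in> A \<and> y \<in> A"
  unfolding connected_set_def by blast

lemma connected_collect:
  assumes cS: "connectoid S F" and q: "q \<in> C" and cC: "connected_set F C"
    and fP: "finite P" and PC: "P \<subseteq> C"
  shows "\<exists>A\<in>F. A \<subseteq> C \<and> insert q P \<subseteq> A"
  using fP PC
proof (induction P rule: finite_induct)
  case empty
  obtain A where "A \<in> F" "A \<subseteq> C" "q \<in> A"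
    using conn_pair[OF cC q q] by blast
  then show ?case by blast
next
  case (insert p P)
  then obtain A where A: "A \<in> F" "A \<subseteq> C" "insert q P \<subseteq> A" by blast
  have pC: "p \<in> C" using insert.prems by simp
  obtain A' where A': "A' \<in> F" "A' \<subseteq> C" "q \<in> A'" "p \<in> A'"
    using conn_pair[OF cC q pC] by blast
  have "A \<union> A' \<in> F" using F_props(2)[OF cS A(1) A'(1)] A(3) A'(3) by blast
  then show ?case using A A' by (intro bexI[of _ "A \<union> A'"]) auto
qed

lemma fin_conn_in_F:
  assumes cS: "connectoid S F" and "finite H" and "connected_set F H"
  shows "H \<in> F"
proof (cases "H = {}")
  case True then show ?thesis using F_props(3)[OF cS] by simp
next
  case False
  then obtain q where "q \<in> H" by blast
  from connected_collect[OF cS this assms(3) assms(2)] obtain A where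
    "A \<in> F" "A \<subseteq> H" "insert q H \<subseteq> A" by blast
  then show ?thesis by (metis insert_subset subset_antisym)
qed

lemma union_connected:
  assumes cS: "connectoid S F" and "\<And>D. D \<in> DD \<Longrightarrow> connected_set F D \<and> x \<in> D"
  shows "connected_set F (\<Union>DD)"
  unfolding connected_set_def
proof (intro ballI)
  fix a b assume "a \<in> \<Union>DD" "b \<in> \<Union>DD"
  then obtain D1 D2 where D: "D1 \<in> DD" "D2 \<in> DD" "a \<in> D1" "b \<in> D2" by blast
  obtain A1 where A1: "A1 \<in> F" "A1 \<subseteq> D1" "a \<in> A1" "x \<in> A1"
    using assms(2)[OF D(1)] D(3) conn_pair by metis
  obtain A2 where A2: "A2 \<in> F" "A2 \<subseteq> D2" "x \<in> A2" "b \<in> A2"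
    using assms(2)[OF D(2)] D(4) conn_pair by metis
  have "A1 \<union> A2 \<in> F" using F_props(2)[OF cS A1(1) A2(1)] A1(4) A2(3) by blast
  moreover have "A1 \<union> A2 \<subseteq> \<Union>DD" using A1 A2 D by blast
  ultimately show "\<exists>A\<in>F. A \<subseteq> \<Union>DD \<and> a \<in> A \<and> b \<in> A" using A1 A2 by blast
qed

lemma comp_exists:
  assumes cS: "connectoid S F" and "connected_set F C" "C \<subseteq> S'" "x \<in> C"
  shows "\<exists>K\<in>components F S'. C \<subseteq> K"
proof -
  define K where "K = \<Union>{D. D \<subseteq> S' \<and> connected_set F D \<and> x \<in> D}"
  have cK: "connected_set F K" unfolding K_def by (rule union_connected[OF cS]) blast
  have "K \<in> components F S'"
    unfolding components_def
  proof (intro CollectI conjI allI impI)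
    show "K \<subseteq> S'" unfolding K_def by blast
    show "connected_set F K" by (rule cK)
    fix D assume "K \<subseteq> D \<and> D \<subseteq> S' \<and> connected_set F D"
    moreover have "x \<in> K" unfolding K_def using assms by blast
    ultimately show "D = K" unfolding K_def by blast
  qed
  moreover have "C \<subseteq> K" unfolding K_def using assms by blast
  ultimately show ?thesis by blast
qed

lemma comp_unique:
  assumes cS: "connectoid S F" and K1: "K1 \<in> components F S'" and K2: "K2 \<in> components F S'"
    and "K1 \<inter> K2 \<noteq> {}"
  shows "K1 = K2"
proof -
  obtain x where x: "x \<in> K1" "x \<in> K2" using assms(4) by blast
  have c: "connected_set F (\<Union>{K1, K2})"
    apply (rule union_connected[OF cS, where x=x])
    using K1 K2 x unfolding components_def by blast
  have "K1 \<union> K2 = K1" using K1 K2 c unfolding components_def by auto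
  moreover have "K1 \<union> K2 = K2" using K1 K2 c unfolding components_def by auto
  ultimately show ?thesis by blast
qed

lemma comp_unique_cofinite:
  assumes cS: "connectoid S F" and "K1 \<in> components F S'" "K2 \<in> components F S'"
    and "infinite X" "finite (X - K1)" "finite (X - K2)"
  shows "K1 = K2"
proof -
  have "K1 \<inter> K2 \<noteq> {}"
  proof
    assume "K1 \<inter> K2 = {}"
    then have "X \<subseteq> (X - K1) \<union> (X - K2)" by blast
    then show False using assms(4-6) finite_subset by blast
  qed
  then show ?thesis using comp_unique[OF cS assms(2,3)] by blast
qed

lemma chain_connected:
  assumes cS: "connectoid S F" and HF: "\<And>n. H n \<in> F" and adj: "\<And>n. H n \<inter> H (Suc n) \<noteq> {}"
  shows "connected_set F (\<Union>n. H n)"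
proof -
  have claim: "\<forall>x y. x \<in> H i \<longrightarrow> y \<in> H (i + d) \<longrightarrow> (\<exists>A\<in>F. A \<subseteq> (\<Union>n. H n) \<and> x \<in> A \<and> y \<in> A)" for i d
  proof (induction d)
    case 0
    then show ?case using HF by auto
  next
    case (Suc d)
    show ?case
    proof (intro allI impI)
      fix x y assume x: "x \<in> H i" and y: "y \<in> H (i + Suc d)"
      obtain z where z: "z \<in> H (i + d)" "z \<in> H (Suc (i + d))" using adj[of "i+d"] by blast
      obtain A where A: "A \<in> F" "A \<subseteq> (\<Union>n. H n)" "x \<in> A" "z \<in> A" using Suc x z by blast
      have "A \<union> H (Suc (i + d)) \<in> F" using F_props(2)[OF cS A(1) HF] A(4) z(2) by blast
      then show "\<exists>A\<in>F. A \<subseteq> (\<Union>n. H n) \<and> x \<in> A \<and> y \<in> A"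
        using A y by (intro bexI[of _ "A \<union> H (Suc (i + d))"]) auto
    qed
  qed
  show ?thesis unfolding connected_set_def
  proof (intro ballI)
    fix x y assume "x \<in> (\<Union>n. H n)" "y \<in> (\<Union>n. H n)"
    then obtain i j where ij: "x \<in> H i" "y \<in> H j" by blast
    show "\<exists>A\<in>F. A \<subseteq> (\<Union>n. H n) \<and> x \<in> A \<and> y \<in> A"
    proof (cases "i \<le> j")
      case True
      then have "j = i + (j - i)" by simp
      then show ?thesis using claim[of i "j - i"] ij by metis
    next
      case False
      then have "i = j + (i - j)" by simp
      then show ?thesis using claim[of j "i - j"] ij by metis
    qed
  qed
qed


lemma neck_H:
  assumes "necklace F N"
  obtains H :: "nat \<Rightarrow> 'a set" where "N = (\<Union>n. H n)" "\<And>n. finite (H n) \<and> connected_set F (H n)"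
    "\<And>i j. H i \<inter> H j \<noteq> {} \<longleftrightarrow> i \<le> j + 1 \<and> j \<le> i + 1"
proof -
  have "\<exists>H :: nat \<Rightarrow> 'a set. N = (\<Union>n. H n) \<and>
        (\<forall>n. finite (H n) \<and> connected_set F (H n)) \<and>
        (\<forall>i j. H i \<inter> H j \<noteq> {} \<longleftrightarrow> i \<le> j + 1 \<and> j \<le> i + 1)"
    using assms unfolding necklace_def by (rule conjunct2)
  then obtain H :: "nat \<Rightarrow> 'a set" where h: "N = (\<Union>n. H n) \<and>
        (\<forall>n. finite (H n) \<and> connected_set F (H n)) \<and>
        (\<forall>i j. H i \<inter> H j \<noteq> {} \<longleftrightarrow> i \<le> j + 1 \<and> j \<le> i + 1)" by (rule exE)
  have h1: "N = (\<Union>n. H n)" using h by (rule conjunct1)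
  have h2: "\<forall>n. finite (H n) \<and> connected_set F (H n)" using h by (rule conjunct1[OF conjunct2])
  have h3: "\<forall>i j. H i \<inter> H j \<noteq> {} \<longleftrightarrow> i \<le> j + 1 \<and> j \<le> i + 1" using h by (rule conjunct2[OF conjunct2])
  show ?thesis
    apply (rule that[of H])
    apply (rule h1)
    apply (rule spec[OF h2])
    apply (rule spec[OF spec[OF h3]])
    done
qed

lemma neck_hits:
  fixes H :: "nat \<Rightarrow> 'a set"
  assumes iff: "\<And>i j. H i \<inter> H j \<noteq> {} \<longleftrightarrow> i \<le> j + 1 \<and> j \<le> i + 1" and fZ: "finite Z"
  shows "\<exists>m. \<forall>n\<ge>m. H n \<inter> Z = {}"
proof -
  have fz: "finite {n. z \<in> H n}" for z
  proof (cases "\<exists>m0. z \<in> H m0")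
    case True
    then obtain m0 where "z \<in> H m0" by blast
    have "{n. z \<in> H n} \<subseteq> {..m0+1}"
    proof
      fix n assume "n \<in> {n. z \<in> H n}"
      then have "H m0 \<inter> H n \<noteq> {}" using \<open>z \<in> H m0\<close> by blast
      then have "n \<le> m0 + 1" using iff[of m0 n] by simp
      then show "n \<in> {..m0+1}" by simp
    qed
    then show ?thesis using finite_atMost[of "m0+1"] by (rule finite_subset)
  next
    case False then show ?thesis by simp
  qed
  have "{n. H n \<inter> Z \<noteq> {}} = (\<Union>z\<in>Z. {n. z \<in> H n})" by blast
  then have "finite {n. H n \<inter> Z \<noteq> {}}" using fZ fz by simp
  then obtain k where "{n. H n \<inter> Z \<noteq> {}} \<subseteq> {..<k}" using finite_nat_iff_bounded by blast
  then show ?thesis by (intro exI[of _ k]) force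
qed

lemma neck_infinite:
  assumes "necklace F N"
  shows "infinite N"
proof
  assume fN: "finite N"
  obtain H :: "nat \<Rightarrow> 'a set" where H: "N = (\<Union>n. H n)" "\<And>i j. H i \<inter> H j \<noteq> {} \<longleftrightarrow> i \<le> j + 1 \<and> j \<le> i + 1"
    using neck_H[OF assms] by metis
  obtain m where "\<forall>n\<ge>m. H n \<inter> N = {}" using neck_hits[OF H(2) fN] by blast
  moreover have "H m \<noteq> {}" using H(2)[of m m] by auto
  ultimately show False using H(1) by blast
qed

lemma neck_tailset:
  assumes cS: "connectoid S F" and nN: "necklace F N" and fZ: "finite Z"
  shows "\<exists>T. connected_set F T \<and> T \<subseteq> N - Z \<and> finite (N - T) \<and> T \<noteq> {}"
proof -
  obtain H :: "nat \<Rightarrow> 'a set" where H: "N = (\<Union>n. H n)" "\<And>n. finite (H n) \<and> connected_set F (H n)"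
    "\<And>i j. H i \<inter> H j \<noteq> {} \<longleftrightarrow> i \<le> j + 1 \<and> j \<le> i + 1"
    using neck_H[OF nN] by metis
  obtain m where m: "\<forall>n\<ge>m. H n \<inter> Z = {}" using neck_hits[OF H(3) fZ] by blast
  define T where "T = (\<Union>n. H (n + m))"
  have "connected_set F T" unfolding T_def
    apply (rule chain_connected[OF cS])
    using fin_conn_in_F[OF cS] H(2) apply blast
    using H(3) by simp
  moreover have "T \<subseteq> N - Z"
  proof
    fix x assume "x \<in> T"
    then obtain n where x: "x \<in> H (n + m)" unfolding T_def by blast
    have "H (n + m) \<inter> Z = {}" using m by simp
    then show "x \<in> N - Z" using x H(1) by blast
  qed
  moreover have "N - T \<subseteq> (\<Union>n<m. H n)"
  proof
    fix x assume x: "x \<in> N - T"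
    then obtain k where k: "x \<in> H k" using H(1) by blast
    have "\<not> m \<le> k"
    proof
      assume "m \<le> k"
      then have "k = (k - m) + m" by simp
      then have "x \<in> T" unfolding T_def using k by (metis UN_I UNIV_I)
      then show False using x by blast
    qed
    then show "x \<in> (\<Union>n<m. H n)" using k by auto
  qed
  then have "finite (N - T)" by (rule finite_subset) (simp add: H(2))
  moreover have "T \<noteq> {}"
  proof -
    have "H (0 + m) \<noteq> {}" using H(3)[of m m] by auto
    then show ?thesis unfolding T_def by blast
  qed
  ultimately show ?thesis by blast
qed

lemma tail_props:
  assumes cS: "connectoid S F" and nN: "necklace F N" and fZ: "finite Z"
  shows "tail F N Z \<in> components F (N - Z) \<and> finite (N - tail F N Z) \<and> tail F N Z \<noteq> {}"
proof -
  obtain T where T: "connected_set F T" "T \<subseteq> N - Z" "finite (N - T)" "T \<noteq> {}"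
    using neck_tailset[OF assms] by blast
  obtain x where "x \<in> T" using T(4) by blast
  obtain K where K: "K \<in> components F (N - Z)" "T \<subseteq> K"
    using comp_exists[OF cS T(1) T(2) \<open>x \<in> T\<close>] by blast
  have fK: "finite (N - K)" using T(3) K(2) finite_subset[of "N - K" "N - T"] by blast
  have iN: "infinite N" using neck_infinite[OF nN] .
  have eq: "tail F N Z = K" unfolding tail_def
  proof (rule the_equality)
    show "K \<in> components F (N - Z) \<and> finite (N - K)" using K fK by blast
    fix K' assume "K' \<in> components F (N - Z) \<and> finite (N - K')"
    then show "K' = K" using comp_unique_cofinite[OF cS _ K(1) iN] fK by blast
  qed
  have "K \<noteq> {}" using K(2) T(4) by blast
  then show ?thesis using eq K fK by simp
qed

lemma tail_in_comp:
  assumes cS: "connectoid S F" and nN: "necklace F N" and NS: "N \<subseteq> S" and fZ: "finite Z"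
  shows "\<exists>K\<in>components F (S - Z). tail F N Z \<subseteq> K"
proof -
  have tp: "tail F N Z \<in> components F (N - Z)" "tail F N Z \<noteq> {}"
    using tail_props[OF cS nN fZ] by auto
  then obtain x where "x \<in> tail F N Z" by blast
  moreover have "connected_set F (tail F N Z)" "tail F N Z \<subseteq> S - Z"
    using tp(1) NS unfolding components_def by auto
  ultimately show ?thesis using comp_exists[OF cS] by blast
qed

lemma end_comp_eq:
  assumes cS: "connectoid S F" and nN: "necklace F N0" and NS: "N0 \<subseteq> S"
    and fY: "finite Y" and YS: "Y \<subseteq> S"
    and om: "\<omega> = {N'. necklace F N' \<and> N' \<subseteq> S \<and> necklace_equiv S F N0 N'}"
    and K: "K \<in> components F (S - Y)" and tK: "tail F N0 Y \<subseteq> K"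
  shows "end_comp S F Y \<omega> = K"
  unfolding end_comp_def
proof (rule the_equality)
  have tne: "tail F N0 Y \<noteq> {}" using tail_props[OF cS nN fY] by blast
  show "K \<in> components F (S - Y) \<and> (\<forall>N\<in>\<omega>. tail F N Y \<subseteq> K)"
  proof (intro conjI ballI)
    show "K \<in> components F (S - Y)" by (rule K)
    fix N assume "N \<in> \<omega>"
    then have "necklace_equiv S F N0 N" using om by blast
    then obtain K' where K': "K' \<in> components F (S - Y)" "tail F N0 Y \<subseteq> K'" "tail F N Y \<subseteq> K'"
      unfolding necklace_equiv_def using fY YS by blast
    have "K' = K" using comp_unique[OF cS K' (1) K] K'(2) tK tne by blast
    then show "tail F N Y \<subseteq> K" using K'(3) by blast
  qed
  fix K'' assume K'': "K'' \<in> components F (S - Y) \<and> (\<forall>N\<in>\<omega>. tail F N Y \<subseteq> K'')"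
  have "necklace_equiv S F N0 N0" unfolding necklace_equiv_def
    using tail_in_comp[OF cS nN NS] by blast
  then have "N0 \<in> \<omega>" using om nN NS by blast
  then have "tail F N0 Y \<subseteq> K''" using K'' by blast
  then show "K'' = K" using comp_unique[OF cS _ K] K'' tK tne by blast
qed

lemma iii_to_i:
  assumes cS: "connectoid S F" and nN: "necklace F N" and NS: "N \<subseteq> S"
    and fX: "finite (X - N)" and iX: "infinite X"
  shows "\<exists>\<omega>\<in>ends S F. converges_to S F X \<omega>"
proof -
  define \<omega> where "\<omega> = {N'. necklace F N' \<and> N' \<subseteq> S \<and> necklace_equiv S F N N'}"
  have "\<omega> \<in> ends S F" unfolding ends_def \<omega>_def using nN NS by blast
  moreover have "converges_to S F X \<omega>" unfolding converges_to_def
  proof (intro conjI allI impI)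
    show "infinite X" by (rule iX)
    fix Y assume Y: "finite Y \<and> Y \<subseteq> S"
    obtain K where K: "K \<in> components F (S - Y)" "tail F N Y \<subseteq> K"
      using tail_in_comp[OF cS nN NS] Y by blast
    have e: "end_comp S F Y \<omega> = K" using end_comp_eq[OF cS nN NS _ _ \<omega>_def K] Y by blast
    have sub: "X - K \<subseteq> (X - N) \<union> (N - tail F N Y)" using K(2) by blast
    have fin2: "finite (N - tail F N Y)" using tail_props[OF cS nN] Y by blast
    have "finite (X - K)" by (rule finite_subset[OF sub]) (simp add: fX fin2)
    then show "finite (X - end_comp S F Y \<omega>)" using e by simp
  qed
  ultimately show ?thesis by blast
qed

lemma i_to_ii:
  assumes cS: "connectoid S F" and om: "\<omega> \<in> ends S F" and cv: "converges_to S F X \<omega>"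
  shows "\<forall>Y. finite Y \<and> Y \<subseteq> S \<longrightarrow> (\<exists>C\<in>components F (S - Y). finite (X - C))"
proof (intro allI impI)
  fix Y assume Y: "finite Y \<and> Y \<subseteq> S"
  obtain N0 where N0: "necklace F N0" "N0 \<subseteq> S"
    "\<omega> = {N'. necklace F N' \<and> N' \<subseteq> S \<and> necklace_equiv S F N0 N'}"
    using om unfolding ends_def by blast
  obtain K where K: "K \<in> components F (S - Y)" "tail F N0 Y \<subseteq> K"
    using tail_in_comp[OF cS N0(1,2)] Y by blast
  have e: "end_comp S F Y \<omega> = K" using end_comp_eq[OF cS N0(1,2) _ _ N0(3) K] Y by blast
  then show "\<exists>C\<in>components F (S - Y). finite (X - C)" using cv Y K(1)
    unfolding converges_to_def by metis
qed


lemma construct: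
  assumes cS: "connectoid S F" and XS: "X \<subseteq> S" and cX: "countable X" and iX: "infinite X"
    and ii: "\<forall>Y. finite Y \<and> Y \<subseteq> S \<longrightarrow> (\<exists>C\<in>components F (S - Y). finite (X - C))"
  shows "\<exists>N D0. necklace F N \<and> N \<subseteq> S \<and> D0 \<in> components F S \<and> finite (X - D0) \<and> X \<inter> D0 \<subseteq> N"
proof -
  define D where "D Y = (SOME C. C \<in> components F (S - Y) \<and> finite (X - C))" for Y
  have D: "D Y \<in> components F (S - Y) \<and> finite (X - D Y)" if "finite Y" "Y \<subseteq> S" for Y
  proof -
    have "\<exists>C. C \<in> components F (S - Y) \<and> finite (X - C)" using ii that by blast
    then show ?thesis unfolding D_def by (rule someI_ex)
  qed
  have Dsub: "D Y \<subseteq> S - Y" "connected_set F (D Y)" if "finite Y" "Y \<subseteq> S" for Y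
    using D[OF that] unfolding components_def by auto
  have Dmeet: "X \<inter> D Y \<inter> D Y' \<noteq> {}" if "finite Y" "Y \<subseteq> S" "finite Y'" "Y' \<subseteq> S" for Y Y'
  proof
    assume "X \<inter> D Y \<inter> D Y' = {}"
    then have "X \<subseteq> (X - D Y) \<union> (X - D Y')" by blast
    moreover have "finite ((X - D Y) \<union> (X - D Y'))" using D[OF that(1,2)] D[OF that(3,4)] by simp
    ultimately show False using iX finite_subset by blast
  qed
  define x where "x = from_nat_into X"
  have Xr: "X = range x" unfolding x_def using cX iX by (metis finite.emptyI range_from_nat_into)
  define nxt where "nxt Y H n = (SOME A. A \<in> F \<and> A \<subseteq> D Y \<and> H \<inter> A \<noteq> {} \<and> A \<inter> D (Y \<union> H) \<noteq> {}
      \<and> X \<inter> D Y - D (Y \<union> H) \<subseteq> A \<and> {x n} \<inter> D Y \<subseteq> A)" for Y H n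
  have nxt: "nxt Y H n \<in> F \<and> nxt Y H n \<subseteq> D Y \<and> H \<inter> nxt Y H n \<noteq> {} \<and> nxt Y H n \<inter> D (Y \<union> H) \<noteq> {}
      \<and> X \<inter> D Y - D (Y \<union> H) \<subseteq> nxt Y H n \<and> {x n} \<inter> D Y \<subseteq> nxt Y H n"
    if Y: "finite Y" "Y \<subseteq> S" and H: "H \<in> F" "H \<inter> D Y \<noteq> {}" for Y H n
  proof -
    obtain q where q: "q \<in> H" "q \<in> D Y" using H(2) by blast
    have fH: "finite H" "H \<subseteq> S" using F_props(1)[OF cS H(1)] by auto
    have YH: "finite (Y \<union> H)" "Y \<union> H \<subseteq> S" using Y fH by auto
    obtain r where r: "r \<in> X" "r \<in> D Y" "r \<in> D (Y \<union> H)" using Dmeet[OF Y YH] by blast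
    define P where "P = {r} \<union> (X \<inter> D Y - D (Y \<union> H)) \<union> ({x n} \<inter> D Y)"
    have "X \<inter> D Y - D (Y \<union> H) \<subseteq> X - D (Y \<union> H)" by blast
    then have "finite (X \<inter> D Y - D (Y \<union> H))" using D[OF YH] finite_subset by blast
    then have fP: "finite P" unfolding P_def by simp
    have PD: "P \<subseteq> D Y" unfolding P_def using r by blast
    obtain A where A: "A \<in> F" "A \<subseteq> D Y" "insert q P \<subseteq> A"
      using connected_collect[OF cS q(2) Dsub(2)[OF Y] fP PD] by blast
    have "A \<in> F \<and> A \<subseteq> D Y \<and> H \<inter> A \<noteq> {} \<and> A \<inter> D (Y \<union> H) \<noteq> {}
      \<and> X \<inter> D Y - D (Y \<union> H) \<subseteq> A \<and> {x n} \<inter> D Y \<subseteq> A"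
    proof (intro conjI)
      show "H \<inter> A \<noteq> {}" using A(3) q(1) by blast
      show "A \<inter> D (Y \<union> H) \<noteq> {}" using A(3) r(3) unfolding P_def by blast
      show "X \<inter> D Y - D (Y \<union> H) \<subseteq> A" using A(3) unfolding P_def by blast
      show "{x n} \<inter> D Y \<subseteq> A" using A(3) unfolding P_def by blast
    qed (use A in auto)
    then have "\<exists>A. A \<in> F \<and> A \<subseteq> D Y \<and> H \<inter> A \<noteq> {} \<and> A \<inter> D (Y \<union> H) \<noteq> {}
      \<and> X \<inter> D Y - D (Y \<union> H) \<subseteq> A \<and> {x n} \<inter> D Y \<subseteq> A" by (rule exI)
    then show ?thesis unfolding nxt_def by (rule someI_ex)
  qed
  have D0: "D {} \<in> components F S" "finite (X - D {})" using D[of "{}"] by auto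
  have "X \<inter> D {} \<noteq> {}"
  proof
    assume "X \<inter> D {} = {}"
    then have "X \<subseteq> X - D {}" by blast
    then show False using D0(2) iX finite_subset by blast
  qed
  then obtain r0 where r0: "r0 \<in> D {}" by blast
  have r0S: "r0 \<in> S" using r0 Dsub(1)[of "{}"] by auto
  define seq where "seq = rec_nat ({}, {r0}) (\<lambda>n p. (fst p \<union> snd p, nxt (fst p) (snd p) n))"
  define Ys where "Ys n = fst (seq n)" for n
  define Hs where "Hs n = snd (seq n)" for n
  have Ys0: "Ys 0 = {}" "Hs 0 = {r0}" unfolding Ys_def Hs_def seq_def by simp_all
  have YsS: "Ys (Suc n) = Ys n \<union> Hs n" "Hs (Suc n) = nxt (Ys n) (Hs n) n" for n
    unfolding Ys_def Hs_def seq_def by simp_all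
  have inv: "finite (Ys n) \<and> Ys n \<subseteq> S \<and> Hs n \<in> F \<and> Hs n \<inter> D (Ys n) \<noteq> {}" for n
  proof (induction n)
    case 0
    then show ?case using Ys0 r0 r0S F_props(4)[OF cS r0S] by simp
  next
    case (Suc n)
    have fHs: "finite (Hs n)" "Hs n \<subseteq> S" using F_props(1)[OF cS] Suc by auto
    have "nxt (Ys n) (Hs n) n \<in> F \<and> nxt (Ys n) (Hs n) n \<inter> D (Ys n \<union> Hs n) \<noteq> {}"
      using nxt[of "Ys n" "Hs n" n] Suc by blast
    then show ?case using YsS Suc fHs by simp
  qed
  have nx: "Hs (Suc n) \<subseteq> D (Ys n) \<and> Hs n \<inter> Hs (Suc n) \<noteq> {}
      \<and> X \<inter> D (Ys n) - D (Ys (Suc n)) \<subseteq> Hs (Suc n) \<and> {x n} \<inter> D (Ys n) \<subseteq> Hs (Suc n)" for n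
    using nxt[of "Ys n" "Hs n" n] inv[of n] YsS by simp
  have Ys_eq: "Ys n = (\<Union>k<n. Hs k)" for n
    by (induction n) (simp_all add: Ys0 YsS lessThan_Suc Un_commute)
  have HsF: "Hs n \<in> F" for n using inv by blast
  have Hne: "Hs n \<noteq> {}" for n using inv[of n] by blast
  have subS: "Hs (Suc n) \<subseteq> S - Ys n" for n
  proof -
    have "D (Ys n) \<subseteq> S - Ys n" using Dsub(1)[of "Ys n"] inv[of n] by simp
    moreover have "Hs (Suc n) \<subseteq> D (Ys n)" using nx[of n] by (rule conjunct1)
    ultimately show ?thesis by (rule order_trans[rotated])
  qed
  have disj: "Hs (Suc n) \<inter> Hs k = {}" if "k < n" for n k
  proof -
    have "Hs k \<subseteq> Ys n" using Ys_eq[of n] that by blast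
    then show ?thesis using subS[of n] by blast
  qed
  have adj: "Hs n \<inter> Hs (Suc n) \<noteq> {}" for n using nx by blast
  have iff: "Hs i \<inter> Hs j \<noteq> {} \<longleftrightarrow> i \<le> j + 1 \<and> j \<le> i + 1" for i j
  proof (cases "i \<le> j + 1 \<and> j \<le> i + 1")
    case True
    then consider "i = j" | "j = Suc i" | "i = Suc j" by linarith
    then show ?thesis
    proof cases
      case 1 then show ?thesis using Hne[of i] by simp
    next
      case 2 then show ?thesis using adj[of i] by simp
    next
      case 3 then show ?thesis using adj[of j] by (simp add: Int_commute)
    qed
  next
    case False
    then consider "i + 2 \<le> j" | "j + 2 \<le> i" by linarith
    then show ?thesis
    proof cases
      case 1
      then have "j = Suc (j - 1)" "i < j - 1" by arith+
      then obtain m where "j = Suc m" "i < m" by blast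
      then show ?thesis using disj[of i m] False by (simp add: Int_commute)
    next
      case 2
      then have "i = Suc (i - 1)" "j < i - 1" by arith+
      then obtain m where "i = Suc m" "j < m" by blast
      then show ?thesis using disj[of j m] False by simp
    qed
  qed
  define N where "N = (\<Union>n. Hs n)"
  have cN: "connected_set F N" unfolding N_def by (rule chain_connected[where H=Hs, OF cS HsF adj])
  have nN: "necklace F N" unfolding necklace_def
  proof (intro conjI exI[of _ Hs])
    show "connected_set F N" by (rule cN)
    show "N = (\<Union>n. Hs n)" by (rule N_def)
    show "\<forall>n. finite (Hs n) \<and> connected_set F (Hs n)"
      using HsF F_props(1)[OF cS] F_connected by blast
    show "\<forall>i j. Hs i \<inter> Hs j \<noteq> {} \<longleftrightarrow> i \<le> j + 1 \<and> j \<le> i + 1" using iff by blast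
  qed
  have NS: "N \<subseteq> S" unfolding N_def using HsF F_props(1)[OF cS] by blast
  have cov: "X \<inter> D {} \<subseteq> N"
  proof
    fix y assume y: "y \<in> X \<inter> D {}"
    have step: "y \<in> D (Ys n) \<or> y \<in> N" for n
    proof (induction n)
      case 0 then show ?case using y Ys0 by simp
    next
      case (Suc n)
      show ?case
      proof (cases "y \<in> D (Ys (Suc n))")
        case False
        then show ?thesis using Suc nx[of n] y unfolding N_def by blast
      qed simp
    qed
    obtain k where k: "y = x k" using y Xr by blast
    show "y \<in> N"
    proof (cases "y \<in> D (Ys k)")
      case True
      then have "y \<in> Hs (Suc k)" using nx[of k] k by blast
      then show ?thesis unfolding N_def by blast
    next
      case False then show ?thesis using step[of k] by blast
    qed
  qed
  show ?thesis using nN NS D0 cov by blast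
qed

theorem proposition2p2:
  fixes S :: "'a set" and F :: "'a set set" and X :: "'a set"
  assumes "connectoid S F" and "X \<subseteq> S" and "countable X" and "infinite X"
  shows "((\<exists>\<omega>\<in>ends S F. converges_to S F X \<omega>) \<longleftrightarrow>
            (\<forall>Y. finite Y \<and> Y \<subseteq> S \<longrightarrow> (\<exists>C\<in>components F (S - Y). finite (X - C))))
       \<and> ((\<forall>Y. finite Y \<and> Y \<subseteq> S \<longrightarrow> (\<exists>C\<in>components F (S - Y). finite (X - C))) \<longleftrightarrow>
            (\<exists>N. necklace F N \<and> N \<subseteq> S \<and> finite (X - N)))
       \<and> (connected_set F S \<longrightarrow>
            ((\<exists>\<omega>\<in>ends S F. converges_to S F X \<omega>) \<longleftrightarrow>
             (\<exists>N. necklace F N \<and> N \<subseteq> S \<and> X \<subseteq> N)))"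
proof -
  note cS = assms(1)
  let ?i = "\<exists>\<omega>\<in>ends S F. converges_to S F X \<omega>"
  let ?ii = "\<forall>Y. finite Y \<and> Y \<subseteq> S \<longrightarrow> (\<exists>C\<in>components F (S - Y). finite (X - C))"
  let ?iii = "\<exists>N. necklace F N \<and> N \<subseteq> S \<and> finite (X - N)"
  have i_ii: "?i \<Longrightarrow> ?ii" using i_to_ii[OF cS] by blast
  have iii_i: "?iii \<Longrightarrow> ?i" using iii_to_i[OF cS _ _ _ assms(4)] by blast
  have ii_iii: "?iii" if hii: "?ii"
  proof -
    obtain N D0 where N: "necklace F N" "N \<subseteq> S" "finite (X - D0)" "X \<inter> D0 \<subseteq> N"
      using construct[OF assms hii] by blast
    have "X - N \<subseteq> X - D0" using N(4) by blast
    then have "finite (X - N)" using N(3) by (rule finite_subset)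
    then show ?thesis using N by blast
  qed
  have conn: "(?i \<longleftrightarrow> (\<exists>N. necklace F N \<and> N \<subseteq> S \<and> X \<subseteq> N))" if cSS: "connected_set F S"
  proof
    assume "?i"
    then have ii: "?ii" by (rule i_ii)
    obtain N D0 where N: "necklace F N" "N \<subseteq> S" "D0 \<in> components F S" "finite (X - D0)" "X \<inter> D0 \<subseteq> N"
      using construct[OF assms ii] by blast
    have Sc: "S \<in> components F S" unfolding components_def using cSS by blast
    have "X - S = {}" using assms(2) by blast
    then have "finite (X - S)" by (simp only: finite.emptyI)
    then have "D0 = S" by (rule comp_unique_cofinite[OF cS N(3) Sc assms(4) N(4)])
    then show "\<exists>N. necklace F N \<and> N \<subseteq> S \<and> X \<subseteq> N" using N assms(2) by blast
  next
    assume "\<exists>N. necklace F N \<and> N \<subseteq> S \<and> X \<subseteq> N"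
    then obtain N where "necklace F N" "N \<subseteq> S" "X \<subseteq> N" by blast
    then have NN: "necklace F N" "N \<subseteq> S" "X \<subseteq> N" by auto
    have "X - N = {}" using NN(3) by blast
    then have "finite (X - N)" by (simp only: finite.emptyI)
    then have "?iii" using NN by blast
    then show "?i" by (rule iii_i)
  qed
  show ?thesis using i_ii iii_i ii_iii conn by blast
qed

end
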